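(* Let $\mu=\mu(n)$ and $\lambda=\lambda(n)$ be positive integers depending on $n$, and consider the expected runtime of the $(\mu,\lambda)$ EA on the $n$-dimensional OneMax function. 1. If there is a constant $\varepsilon\in(0,1)$ such that $\lambda\le(1-\varepsilon)e\mu$, then the expected runtime is exponential in $n$. 2. If there is $\varepsilon=\varepsilon(n)\in(0,1)$ with $\varepsilon=\omega(1/\sqrt n)$ such that $\lambda\le(1-\varepsilon)e\mu$, then the expected runtime is super-polynomial in $n$.
   Context: OneMax is $f:\{0,1\}^n\to\mathbb{R}$, $f(x)=\sum_i x_i$. The $(\mu,\lambda)$ EA: the initial population $P_0$ consists of $\mu$ independent uniformly random points of $\{0,1\}^n$. In each generation $t=0,1,2,\dots$, it creates $\lambda$ offspring independently; each offspring is obtained by picking a parent uniformly at random from $P_t$ and flipping each bit of a copy of it independently with probability $1/n$ (standard bit mutation). $P_{t+1}$ consists of the $\mu$ offspring with the largest $f$-values, ties broken randomly (parents are discarded). The runtime is the number of fitness evaluations until an optimum (the all-ones string) is first evaluated. *)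

theory Defs
  imports "HOL-Probability.Probability" "HOL-Combinatorics.Multiset_Permutations"
    "HOL-Library.Landau_Symbols"
begin

text \<open>Search points of \{0,1\}^n are boolean lists of length n (True = bit 1).\<close>

type_synonym bits = "bool list"

definition onemax :: "bits \<Rightarrow> nat" where
  "onemax x = length (filter id x)"

definition opt :: "nat \<Rightarrow> bits" where
  "opt n = replicate n True"

fun mutate :: "real \<Rightarrow> bits \<Rightarrow> bits pmf" where
  "mutate p [] = return_pmf []"
| "mutate p (b # bs) =
     bind_pmf (bernoulli_pmf p) (\<lambda>f. bind_pmf (mutate p bs) (\<lambda>r. return_pmf ((if f then \<not> b else b) # r)))"

fun iid_list :: "nat \<Rightarrow> 'a pmf \<Rightarrow> 'a list pmf" where
  "iid_list 0 D = return_pmf []"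
| "iid_list (Suc k) D = bind_pmf D (\<lambda>x. bind_pmf (iid_list k D) (\<lambda>xs. return_pmf (x # xs)))"

definition uniform_parent :: "bits list \<Rightarrow> bits pmf" where
  "uniform_parent P = map_pmf (\<lambda>i. P ! i) (pmf_of_set {..<length P})"

text \<open>The lambda offspring of one generation, in order of creation (= order of evaluation).\<close>
definition offspring :: "nat \<Rightarrow> nat \<Rightarrow> bits list \<Rightarrow> bits list pmf" where
  "offspring n lam P = iid_list lam (bind_pmf (uniform_parent P) (mutate (1 / real n)))"

text \<open>Selection of the mu offspring with largest fitness, ties broken uniformly at random:
  random order of the offspring, then stable sort by decreasing fitness, keep the first mu.\<close>
definition select :: "nat \<Rightarrow> bits list \<Rightarrow> bits list pmf" where
  "select mu ys = map_pmf (\<lambda>zs. take mu (sort_key (\<lambda>x. - int (onemax x)) zs))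
                    (pmf_of_set (permutations_of_multiset (mset ys)))"

definition hit_cost :: "nat \<Rightarrow> bits list \<Rightarrow> nat" where
  "hit_cost n ys = Suc (LEAST i. i < length ys \<and> ys ! i = opt n)"

text \<open>One-generation functional for the expected number of further evaluations from a
  population P (no optimum evaluated yet).  Its k-th iterate from 0 is the expected runtime
  truncated at k generations, i.e. E[min(T, k*lambda)].\<close>
definition gen_step :: "nat \<Rightarrow> nat \<Rightarrow> nat \<Rightarrow> (bits list \<Rightarrow> ennreal) \<Rightarrow> bits list \<Rightarrow> ennreal" where
  "gen_step mu lam n E P =
     (\<integral>\<^sup>+ ys. (if opt n \<in> set ys then of_nat (hit_cost n ys)
               else of_nat lam + (\<integral>\<^sup>+ P'. E P' \<partial>measure_pmf (select mu ys)))
        \<partial>measure_pmf (offspring n lam P))"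

definition exp_remaining :: "nat \<Rightarrow> nat \<Rightarrow> nat \<Rightarrow> bits list \<Rightarrow> ennreal" where
  "exp_remaining mu lam n P = (SUP k. ((gen_step mu lam n) ^^ k) (\<lambda>_. 0) P)"

definition init_pop :: "nat \<Rightarrow> nat \<Rightarrow> bits list pmf" where
  "init_pop mu n = iid_list mu (pmf_of_set {x. length x = n})"

text \<open>Expected runtime (number of fitness evaluations until the optimum is first evaluated)
  of the (mu,lambda) EA on OneMax in dimension n; the mu initial individuals are evaluated first.\<close>
definition expected_runtime :: "nat \<Rightarrow> nat \<Rightarrow> nat \<Rightarrow> ennreal" where
  "expected_runtime mu lam n =
     (\<integral>\<^sup>+ P. (if opt n \<in> set P then of_nat (hit_cost n P)
             else of_nat mu + exp_remaining mu lam n P) \<partial>measure_pmf (init_pop mu n))"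

end

theory Submission
  imports Defs "HOL-Real_Asymp.Real_Asymp"
begin


lemma onemax_Cons: "onemax (b # xs) = (if b then 1 else 0) + onemax xs"
  by (simp add: onemax_def)

lemma onemax_le: "onemax xs \<le> length xs"
  by (simp add: onemax_def)

lemma onemax_opt: "onemax (opt n) = n"
  by (simp add: onemax_def opt_def)

lemma set_mutate: "y \<in> set_pmf (mutate p x) \<Longrightarrow> length y = length x"
  by (induction x arbitrary: y) auto

lemma mutate_exp:
  assumes p: "0 \<le> p" "p \<le> 1" and r: "0 \<le> r"
  shows "(\<integral>\<^sup>+y. ennreal (r ^ onemax y) \<partial>mutate p x) =
    ennreal ((p + (1-p)*r) ^ onemax x * ((1-p) + p*r) ^ (length x - onemax x))"
proof (induction x)
  case Nil
  then show ?case by (simp add: onemax_def)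
next
  case (Cons b bs)
  have e: "\<And>c. (\<integral>\<^sup>+y. ennreal (r ^ onemax (c # y)) \<partial>mutate p bs)
       = ennreal (if c then r else 1) * ennreal ((p + (1-p)*r) ^ onemax bs * ((1-p) + p*r) ^ (length bs - onemax bs))"
  proof -
    fix c
    have "(\<integral>\<^sup>+y. ennreal (r ^ onemax (c # y)) \<partial>mutate p bs)
       = (\<integral>\<^sup>+y. ennreal (if c then r else 1) * ennreal (r ^ onemax y) \<partial>mutate p bs)"
      using r by (simp add: onemax_Cons power_add ennreal_mult)
    also have "\<dots> = ennreal (if c then r else 1) * (\<integral>\<^sup>+y. ennreal (r ^ onemax y) \<partial>mutate p bs)"
      by (simp add: nn_integral_cmult)
    finally show "?thesis c" using Cons by simp
  qed
  have ob: "onemax bs \<le> length bs" by (rule onemax_le)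
  let ?A = "(p + (1-p)*r) ^ onemax bs * ((1-p) + p*r) ^ (length bs - onemax bs)"
  have A0: "?A \<ge> 0" using p r by simp
  show ?case
  proof (cases b)
    case True
    have "(\<integral>\<^sup>+y. ennreal (r ^ onemax y) \<partial>mutate p (b # bs)) =
       ennreal 1 * ennreal ?A * ennreal p + ennreal r * ennreal ?A * ennreal (1-p)"
      using p True by (simp add: e)
    also have "\<dots> = ennreal (?A*p) + ennreal (r*?A*(1-p))"
      using p r A0 by (simp add: ennreal_mult)
    also have "\<dots> = ennreal (?A*p + r*?A*(1-p))"
      using p r A0 by (intro ennreal_plus[symmetric]) auto
    also have "\<dots> = ennreal ((p + (1-p)*r) * ?A)"
      by (rule arg_cong[where f=ennreal]) (simp add: algebra_simps)
    finally show ?thesis using True ob by (simp add: onemax_Cons Suc_diff_le mult.assoc del: nn_integral_bind_pmf)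
  next
    case False
    have "(\<integral>\<^sup>+y. ennreal (r ^ onemax y) \<partial>mutate p (b # bs)) =
       ennreal r * ennreal ?A * ennreal p + ennreal 1 * ennreal ?A * ennreal (1-p)"
      using p False by (simp add: e)
    also have "\<dots> = ennreal (r*?A*p) + ennreal (?A*(1-p))"
      using p r A0 by (simp add: ennreal_mult)
    also have "\<dots> = ennreal (r*?A*p + ?A*(1-p))"
      using p r A0 by (intro ennreal_plus[symmetric]) auto
    also have "\<dots> = ennreal (((1-p) + p*r) * ?A)"
      by (rule arg_cong[where f=ennreal]) (simp add: algebra_simps)
    finally show ?thesis using False ob by (simp add: onemax_Cons Suc_diff_le mult.assoc mult.left_commute del: nn_integral_bind_pmf)
  qed
qed



lemma mut_factor_bound:
  fixes n f k :: nat and eps r al mu lam :: real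
  assumes eps: "0 < eps" "eps < 1" and rdef: "r = 8 / eps" and aldef: "al = eps^2/16"
    and n: "n = f + k" "1 \<le> n" "r \<le> real n"
    and lam: "lam \<le> (1 - eps) * exp 1 * mu" and mu: "0 < mu" and lampos: "0 < lam"
  shows "(1/n + (1 - 1/n)*r)^f * ((1 - 1/n) + r/n)^k \<le> (mu/lam) * r^f + r^n * exp (- al * n * (ln r - 1))"
proof -
  define a where "a = 1 / real n"
  have npos: "real n > 0" using n by simp
  have a0: "0 < a" "a \<le> 1" using n by (auto simp: a_def)
  have r8: "r \<ge> 8" using eps by (simp add: rdef le_divide_eq)
  have lnr: "ln r \<ge> 1"
  proof -
    have "exp 1 \<le> (3::real)" using exp_le by simp
    hence "exp 1 \<le> r" using r8 by simp
    thus ?thesis using r8 by (subst ln_ge_iff) auto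
  qed
  have f1: "a + (1-a)*r \<le> r * exp (- a * (1 - 1/r))"
  proof -
    have "a + (1-a)*r = r * (1 + (- a * (1 - 1/r)))" using r8 by (simp add: field_simps)
    also have "\<dots> \<le> r * exp (- a * (1 - 1/r))"
      using r8 by (intro mult_left_mono exp_ge_add_one_self) auto
    finally show ?thesis .
  qed
  have f2: "(1 - a) + a*r \<le> exp (a * (r - 1))"
  proof -
    have "(1 - a) + a*r = 1 + a * (r - 1)" by (simp add: algebra_simps)
    also have "\<dots> \<le> exp (a * (r - 1))" by (rule exp_ge_add_one_self)
    finally show ?thesis .
  qed
  define E where "E = - a * (1 - 1/r) * f + a * (r - 1) * k"
  have rf: "r ^ f = exp (real f * ln r)" using r8 by (simp add: exp_of_nat_mult)
  have "(a + (1-a)*r)^f * ((1-a) + a*r)^k \<le> (r * exp (- a * (1 - 1/r)))^f * (exp (a * (r - 1)))^k"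
    using a0 r8 f1 f2 by (intro mult_mono power_mono) (auto intro!: add_nonneg_nonneg mult_nonneg_nonneg)
  also have "\<dots> = r^f * exp E"
    by (simp add: E_def power_mult_distrib exp_of_nat_mult[symmetric] exp_add[symmetric] algebra_simps)
  finally have L: "(a + (1-a)*r)^f * ((1-a) + a*r)^k \<le> r^f * exp E" .
  have main: "r^f * exp E \<le> (mu/lam) * r^f + r^n * exp (- al * n * (ln r - 1))"
  proof (cases "real k \<le> al * n")
    case True
    have Eb: "E \<le> eps - 1"
    proof -
      have t: "a * k \<le> al" using True a0 by (simp add: a_def field_simps)
      have fk: "a * f = 1 - a * k" using n npos by (simp add: a_def field_simps)
      have "E = -(1 - 1/r) * (a*f) + (r-1)*(a*k)" unfolding E_def by (simp add: algebra_simps)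
      also have "\<dots> = -(1 - 1/r) + (a*k) * (r - 1/r)" unfolding fk by (simp add: algebra_simps)
      also have "\<dots> \<le> -(1 - 1/r) + al * r"
      proof -
        have al0: "0 \<le> al" by (simp add: aldef)
        have h1: "1/r \<le> 1" using r8 by simp
        have h2: "0 < 1/r" using r8 by simp
        have h3: "r - 1/r \<le> r" "1/r \<le> r" using r8 h1 h2 by linarith+
        show ?thesis using t r8 a0 al0 h3 by (intro add_left_mono mult_mono) auto
      qed
      also have "\<dots> \<le> eps - 1"
        using eps by (simp add: rdef aldef power2_eq_square field_simps)
      finally show ?thesis .
    qed
    have "lam * exp E \<le> (1 - eps) * exp 1 * mu * exp (eps - 1)"
      using lam Eb lampos mu eps by (intro mult_mono) auto
    also have "\<dots> = ((1 - eps) * exp eps) * mu" by (simp add: exp_diff field_simps)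
    also have "\<dots> \<le> 1 * mu"
    proof -
      have "1 - eps \<le> exp (-eps)" using exp_ge_add_one_self[of "-eps"] by simp
      hence "(1 - eps) * exp eps \<le> exp (-eps) * exp eps" by (simp add: mult_right_mono)
      hence "(1 - eps) * exp eps \<le> 1" by (simp add: exp_minus)
      thus ?thesis using mu by (intro mult_right_mono) auto
    qed
    finally have "exp E \<le> mu / lam" using lampos by (simp add: field_simps)
    hence "r^f * exp E \<le> r^f * (mu/lam)" using r8 by (intro mult_left_mono) auto
    hence "r^f * exp E \<le> (mu/lam) * r^f" by (simp only: mult.commute)
    moreover have "0 \<le> r^n * exp (- al * n * (ln r - 1))" using r8 by simp
    ultimately show ?thesis by linarith
  next
    case False
    have e1: "0 \<le> a * (1 - 1/r) * f" using a0 r8 by (intro mult_nonneg_nonneg) auto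
    have e2: "a * (r - 1) * k \<le> a * r * k" using a0 r8 by (intro mult_right_mono mult_left_mono) auto
    have "E \<le> a * r * k" unfolding E_def using e1 e2 by linarith
    also have "\<dots> \<le> 1 * real k"
    proof -
      have "a * r \<le> 1" using n npos by (simp add: a_def field_simps)
      thus ?thesis by (intro mult_right_mono) auto
    qed
    finally have Ek: "E \<le> k" by simp
    have "r^f * exp E = exp (real f * ln r + E)" by (simp add: rf exp_add)
    also have "\<dots> \<le> exp (real n * ln r - k * (ln r - 1))"
      using Ek n by (simp add: algebra_simps)
    also have "\<dots> \<le> exp (real n * ln r - al * n * (ln r - 1))"
      using False lnr by (simp add: mult_right_mono)
    also have "\<dots> = exp (real n * ln r) * exp (- al * n * (ln r - 1))"
      by (simp add: exp_add[symmetric])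
    also have "exp (real n * ln r) = r^n"
      using r8 by (simp add: exp_of_nat_mult)
    finally have "r^f * exp E \<le> r^n * exp (- al * n * (ln r - 1))" .
    moreover have "0 \<le> (mu/lam) * r^f" using mu lampos r8 by simp
    ultimately show ?thesis by linarith
  qed
  show ?thesis using L main by (simp add: a_def)
qed



definition phi :: "real \<Rightarrow> bits list \<Rightarrow> real" where
  "phi r xs = (\<Sum>y\<leftarrow>xs. r ^ onemax y)"

lemma phi_Cons: "phi r (x # xs) = r ^ onemax x + phi r xs"
  by (simp add: phi_def)

lemma phi_nonneg: "0 \<le> r \<Longrightarrow> 0 \<le> phi r xs"
  by (induction xs) (auto simp: phi_def)

lemma set_iid_list: "ys \<in> set_pmf (iid_list k D) \<Longrightarrow> length ys = k \<and> set ys \<subseteq> set_pmf D"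
  by (induction k arbitrary: ys) (simp, fastforce)

lemma iid_list_sum_take:
  assumes h: "\<And>y. 0 \<le> h y"
  shows "(\<integral>\<^sup>+ys. ennreal (\<Sum>y\<leftarrow>take M ys. h y) \<partial>iid_list k D) = of_nat (min M k) * (\<integral>\<^sup>+y. ennreal (h y) \<partial>D)"
proof (induction k arbitrary: M)
  case 0
  then show ?case by simp
next
  case (Suc k)
  show ?case
  proof (cases M)
    case 0
    then show ?thesis by simp
  next
    case (Suc M')
    have "(\<integral>\<^sup>+ys. ennreal (\<Sum>y\<leftarrow>take M ys. h y) \<partial>iid_list (Suc k) D)
        = (\<integral>\<^sup>+x. (\<integral>\<^sup>+xs. ennreal (h x + (\<Sum>y\<leftarrow>take M' xs. h y)) \<partial>iid_list k D) \<partial>D)"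
      using Suc by simp
    also have "\<dots> = (\<integral>\<^sup>+x. ennreal (h x) + of_nat (min M' k) * (\<integral>\<^sup>+y. ennreal (h y) \<partial>D) \<partial>D)"
    proof (intro nn_integral_cong)
      fix x
      have "(\<integral>\<^sup>+xs. ennreal (h x + (\<Sum>y\<leftarrow>take M' xs. h y)) \<partial>iid_list k D)
         = (\<integral>\<^sup>+xs. ennreal (h x) + ennreal (\<Sum>y\<leftarrow>take M' xs. h y) \<partial>iid_list k D)"
        using h by (intro nn_integral_cong ennreal_plus) (auto intro!: sum_list_nonneg)
      also have "\<dots> = ennreal (h x) + of_nat (min M' k) * (\<integral>\<^sup>+y. ennreal (h y) \<partial>D)"
        by (simp add: nn_integral_add Suc.IH measure_pmf.emeasure_space_1)
      finally show "(\<integral>\<^sup>+xs. ennreal (h x + (\<Sum>y\<leftarrow>take M' xs. h y)) \<partial>iid_list k D) = ennreal (h x) + of_nat (min M' k) * (\<integral>\<^sup>+y. ennreal (h y) \<partial>D)" .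
    qed
    also have "\<dots> = (\<integral>\<^sup>+y. ennreal (h y) \<partial>D) + of_nat (min M' k) * (\<integral>\<^sup>+y. ennreal (h y) \<partial>D)"
      by (simp add: nn_integral_add measure_pmf.emeasure_space_1)
    also have "\<dots> = of_nat (min M (Suc k)) * (\<integral>\<^sup>+y. ennreal (h y) \<partial>D)"
      using Suc by (simp add: distrib_right)
    finally show ?thesis .
  qed
qed

lemma iid_list_sum:
  assumes h: "\<And>y. 0 \<le> h y"
  shows "(\<integral>\<^sup>+ys. ennreal (\<Sum>y\<leftarrow>ys. h y) \<partial>iid_list k D) = of_nat k * (\<integral>\<^sup>+y. ennreal (h y) \<partial>D)"
proof -
  have "(\<integral>\<^sup>+ys. ennreal (\<Sum>y\<leftarrow>ys. h y) \<partial>iid_list k D) = (\<integral>\<^sup>+ys. ennreal (\<Sum>y\<leftarrow>take k ys. h y) \<partial>iid_list k D)"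
    by (intro nn_integral_cong_AE) (auto simp: AE_measure_pmf_iff dest: set_iid_list)
  also have "\<dots> = of_nat k * (\<integral>\<^sup>+y. ennreal (h y) \<partial>D)"
    using iid_list_sum_take[OF h, where M=k and k=k and D=D] by simp
  finally show ?thesis .
qed

lemma set_uniform_parent: "P \<noteq> [] \<Longrightarrow> set_pmf (uniform_parent P) = set P"
proof -
  assume "P \<noteq> []"
  hence "{..<length P} \<noteq> {}" by auto
  thus ?thesis by (auto simp: uniform_parent_def set_conv_nth)
qed

lemma uniform_parent_exp:
  assumes "P \<noteq> []"
  shows "(\<integral>\<^sup>+x. g x \<partial>uniform_parent P) = (\<Sum>i<length P. g (P ! i)) / of_nat (length P)"
proof -
  have "{..<length P} \<noteq> {}" using assms by auto
  thus ?thesis by (simp add: uniform_parent_def nn_integral_pmf_of_set)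
qed

lemma phi_mset: "phi r L = sum_mset (image_mset (\<lambda>y. r ^ onemax y) (mset L))"
  unfolding phi_def by (induction L) auto

lemma set_select:
  assumes "P' \<in> set_pmf (select mu ys)"
  shows "length P' = min mu (length ys)" "set P' \<subseteq> set ys" "0 \<le> r \<Longrightarrow> phi r P' \<le> phi r ys"
proof -
  obtain zs where zs0: "zs \<in> permutations_of_multiset (mset ys)" and P': "P' = take mu (sort_key (\<lambda>x. - int (onemax x)) zs)"
    using assms by (auto simp: select_def)
  have zs: "mset zs = mset ys" using zs0 by (rule permutations_of_multisetD)
  let ?s = "sort_key (\<lambda>x. - int (onemax x)) zs"
  have ms: "mset ?s = mset ys" using zs by simp
  have len: "length ?s = length ys" using ms by (metis size_mset)
  show "length P' = min mu (length ys)" using P' len by simp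
  show "set P' \<subseteq> set ys" using P' ms by (metis set_mset_mset set_take_subset)
  assume r: "0 \<le> r"
  have "phi r P' \<le> phi r P' + phi r (drop mu ?s)" using phi_nonneg[OF r] by simp
  also have "\<dots> = phi r ?s" unfolding P' phi_def by (simp flip: sum_list_append map_append)
  also have "\<dots> = phi r ys" by (simp only: phi_mset ms)
  finally show "phi r P' \<le> phi r ys" .
qed

lemma phi_ge_member: "0 \<le> r \<Longrightarrow> x \<in> set xs \<Longrightarrow> r ^ onemax x \<le> phi r xs"
  by (induction xs) (auto simp: phi_Cons intro: add_increasing add_increasing2 phi_nonneg zero_le_power)

lemma uniform_sum: "(\<Sum>x\<in>{x::bits. length x = n}. (r::real) ^ onemax x) = (1 + r) ^ n"
proof (induction n)
  case 0
  then show ?case by (simp add: onemax_def)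
next
  case (Suc n)
  have eq: "{x::bits. length x = Suc n} = (\<lambda>(xs, b). b # xs) ` ({x. length x = n} \<times> UNIV)"
    using lists_length_Suc_eq[of "UNIV::bool set" n] by simp
  have inj: "inj_on (\<lambda>(xs, b::bool). b # xs) ({x. length x = n} \<times> UNIV)"
    by (auto simp: inj_on_def)
  have fin: "finite {x::bits. length x = n}"
    using finite_lists_length_eq[of "UNIV::bool set" n] by simp
  have "(\<Sum>x\<in>{x::bits. length x = Suc n}. r ^ onemax x) = (\<Sum>(xs,b)\<in>{x. length x = n} \<times> UNIV. r ^ onemax (b # xs))"
    unfolding eq by (subst sum.reindex[OF inj]) (simp add: case_prod_unfold)
  also have "\<dots> = (\<Sum>xs\<in>{x. length x = n}. \<Sum>b\<in>UNIV. r ^ onemax (b # xs))"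
    by (rule sum.cartesian_product[symmetric])
  also have "\<dots> = (\<Sum>xs\<in>{x. length x = n}. (1 + r) * r ^ onemax xs)"
    by (simp add: UNIV_bool onemax_def algebra_simps)
  also have "\<dots> = (1 + r) ^ Suc n" using Suc by (simp add: sum_distrib_left[symmetric])
  finally show ?case .
qed

lemma card_bits: "card {x::bits. length x = n} = 2 ^ n"
  using card_lists_length_eq[of "UNIV::bool set" n] by (simp add: card_UNIV_bool)

lemma uniform_exp:
  assumes "0 \<le> r"
  shows "(\<integral>\<^sup>+x. ennreal (r ^ onemax x) \<partial>pmf_of_set {x::bits. length x = n}) = ennreal (((1 + r) / 2) ^ n)"
proof -
  have fin: "finite {x::bits. length x = n}"
    using finite_lists_length_eq[of "UNIV::bool set" n] by simp
  have ne: "{x::bits. length x = n} \<noteq> {}" by (auto intro: exI[of _ "replicate n True"])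
  have "(\<integral>\<^sup>+x. ennreal (r ^ onemax x) \<partial>pmf_of_set {x::bits. length x = n})
      = (\<Sum>x\<in>{x::bits. length x = n}. ennreal (r ^ onemax x)) / of_nat (2 ^ n)"
    using fin ne by (simp add: nn_integral_pmf_of_set card_bits)
  also have "\<dots> = ennreal (\<Sum>x\<in>{x::bits. length x = n}. r ^ onemax x) / of_nat (2 ^ n)"
    using assms by (subst sum_ennreal) auto
  also have "\<dots> = ennreal ((1 + r) ^ n) / ennreal (2 ^ n)"
    by (simp only: uniform_sum ennreal_of_nat_eq_real_of_nat of_nat_power of_nat_numeral)
  also have "\<dots> = ennreal (((1 + r) / 2) ^ n)"
    using assms by (simp add: divide_ennreal power_divide)
  finally show ?thesis .
qed



lemma set_offspring:
  assumes "ys \<in> set_pmf (offspring n lam P)" "P \<noteq> []" "\<forall>x\<in>set P. length x = n"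
  shows "length ys = lam" "\<forall>y\<in>set ys. length y = n"
proof -
  have *: "length ys = lam \<and> set ys \<subseteq> set_pmf (bind_pmf (uniform_parent P) (mutate (1 / real n)))"
    using assms(1) unfolding offspring_def by (rule set_iid_list)
  thus "length ys = lam" by simp
  show "\<forall>y\<in>set ys. length y = n"
    using * assms(2,3) by (auto simp: set_uniform_parent dest!: set_mutate)
qed

lemma offspring_exp:
  assumes P: "P \<noteq> []" "\<forall>x\<in>set P. length x = n" and r: "0 \<le> r" and c: "0 \<le> c" and B: "0 \<le> B"
    and MUT: "\<And>x. length x = n \<Longrightarrow> (\<integral>\<^sup>+y. ennreal (r ^ onemax y) \<partial>mutate (1 / real n) x) \<le> ennreal (c * r ^ onemax x + B)"
  shows "(\<integral>\<^sup>+ys. ennreal (phi r ys) \<partial>offspring n lam P) \<le> ennreal (real lam * (c * phi r P / real (length P) + B))"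
proof -
  let ?D = "bind_pmf (uniform_parent P) (mutate (1 / real n))"
  have lp: "length P > 0" using P by simp
  have "(\<integral>\<^sup>+ys. ennreal (phi r ys) \<partial>offspring n lam P) = of_nat lam * (\<integral>\<^sup>+y. ennreal (r ^ onemax y) \<partial>?D)"
    unfolding offspring_def phi_def using r by (intro iid_list_sum) simp
  also have "(\<integral>\<^sup>+y. ennreal (r ^ onemax y) \<partial>?D) =
     (\<Sum>i<length P. (\<integral>\<^sup>+y. ennreal (r ^ onemax y) \<partial>mutate (1 / real n) (P ! i))) / of_nat (length P)"
    by (simp only: nn_integral_bind_pmf uniform_parent_exp[OF P(1)])
  also have "\<dots> \<le> (\<Sum>i<length P. ennreal (c * r ^ onemax (P ! i) + B)) / of_nat (length P)"
    using P by (intro divide_right_mono_ennreal sum_mono MUT) auto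
  also have "\<dots> = ennreal (\<Sum>i<length P. c * r ^ onemax (P ! i) + B) / ennreal (real (length P))"
    using r c B by (subst sum_ennreal) (auto simp: ennreal_of_nat_eq_real_of_nat)
  also have "\<dots> = ennreal ((\<Sum>i<length P. c * r ^ onemax (P ! i) + B) / real (length P))"
    using lp r c B by (intro divide_ennreal) (auto intro!: sum_nonneg)
  also have "(\<Sum>i<length P. c * r ^ onemax (P ! i) + B) = c * phi r P + real (length P) * B"
    by (simp add: sum.distrib sum_distrib_left[symmetric] phi_def sum_list_sum_nth atLeast0LessThan)
  also have "of_nat lam * ennreal ((c * phi r P + real (length P) * B) / real (length P))
      = ennreal (real lam * (c * phi r P / real (length P) + B))"
  proof -
    have "(c * phi r P + real (length P) * B) / real (length P) = c * phi r P / real (length P) + B"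
      using lp by (simp add: field_simps)
    moreover have "0 \<le> c * phi r P / real (length P) + B"
      using c B phi_nonneg[OF r, of P] by simp
    ultimately show ?thesis
      by (simp add: ennreal_of_nat_eq_real_of_nat ennreal_mult del: ennreal_plus)
  qed
  finally show ?thesis by (simp add: mult_left_mono)
qed

lemma real_step_ineq:
  fixes K t v B :: real
  assumes "0 \<le> K" "1 \<le> t" "t \<le> 3" "0 \<le> v" "0 \<le> B"
  shows "((K+1)*t + K^2*t^2)*(v + t*B) + K^3*t^2*B \<le> (K+1)^2*t^2*(v + (K+1)*B)"
proof -
  have eq: "(K+1)^2*t^2*(v + (K+1)*B) - (((K+1)*t + K^2*t^2)*(v + t*B) + K^3*t^2*B)
      = v * t*((2*K+1)*t - (K+1)) + B*t^2*(3*K^2 + 2*K - K^2*t)"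
    by (simp add: algebra_simps power2_eq_square power3_eq_cube)
  have a0: "(2*K+1)*1 \<le> (2*K+1)*t" using assms by (intro mult_left_mono) auto
  have a1: "(2*K+1)*t - (K+1) = ((2*K+1)*t - (2*K+1)*1) + K" by (simp add: algebra_simps)
  have a2: "(2*K+1)*t - (2*K+1)*1 \<ge> 0" using a0 by simp
  have a: "(2*K+1)*t - (K+1) \<ge> 0" unfolding a1 using a2 assms by linarith
  have b: "3*K^2 + 2*K - K^2*t \<ge> 0"
  proof -
    have "K^2*t \<le> K^2*3" using assms by (intro mult_left_mono) auto
    thus ?thesis using assms by simp
  qed
  have "0 \<le> v * t*((2*K+1)*t - (K+1)) + B*t^2*(3*K^2 + 2*K - K^2*t)"
    using a b assms by (intro add_nonneg_nonneg mult_nonneg_nonneg) auto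
  thus ?thesis using eq by simp
qed

lemma real_step_ineq2:
  fixes K lam mu phi B :: real
  assumes "0 \<le> K" "1 \<le> mu" "mu \<le> lam" "lam \<le> 3 * mu" "0 \<le> phi" "0 \<le> B"
  shows "((K+1)*lam + (K*lam)^2/mu)*(phi + lam*B) + (K*lam)^2*(K*B) \<le> ((K+1)*lam)^2*(phi/mu + (K+1)*B)"
proof -
  define t where "t = lam / mu"
  define v where "v = phi / mu"
  have mu0: "mu > 0" using assms by simp
  have lt: "lam = t * mu" and pv: "phi = v * mu" using mu0 by (simp_all add: t_def v_def)
  have t1: "1 \<le> t" "t \<le> 3" using assms mu0 by (simp_all add: t_def field_simps)
  have v0: "0 \<le> v" using assms mu0 by (simp add: v_def)
  have L: "((K+1)*lam + (K*lam)^2/mu)*(phi + lam*B) + (K*lam)^2*(K*B)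
      = mu^2 * (((K+1)*t + K^2*t^2)*(v + t*B) + K^3*t^2*B)"
    unfolding lt pv using mu0 by (simp add: field_simps power2_eq_square power3_eq_cube)
  have R: "((K+1)*lam)^2*(phi/mu + (K+1)*B) = mu^2 * ((K+1)^2*t^2*(v + (K+1)*B))"
    unfolding lt pv using mu0 by (simp add: field_simps power2_eq_square power3_eq_cube)
  show ?thesis unfolding L R
    using real_step_ineq[OF assms(1) t1 v0 assms(6)] by (intro mult_left_mono) auto
qed

definition Dk :: "nat \<Rightarrow> nat \<Rightarrow> nat \<Rightarrow> real \<Rightarrow> real \<Rightarrow> nat \<Rightarrow> bits list \<Rightarrow> real" where
  "Dk mu lam n r B k P = (real k * real lam)^2 * (phi r P / real mu + real k * B) / r ^ n"

lemma gen_bound: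
  assumes mu1: "1 \<le> mu" and mul: "mu \<le> lam" and lam3: "real lam \<le> 3 * real mu"
    and r1: "1 \<le> r" and B0: "0 \<le> B"
    and MUT: "\<And>x. length x = n \<Longrightarrow> (\<integral>\<^sup>+y. ennreal (r ^ onemax y) \<partial>mutate (1 / real n) x)
                  \<le> ennreal ((real mu / real lam) * r ^ onemax x + B)"
  shows "length P = mu \<Longrightarrow> \<forall>x\<in>set P. length x = n \<Longrightarrow>
     ennreal (real k * real lam) \<le> ((gen_step mu lam n) ^^ k) (\<lambda>_. 0) P + ennreal (Dk mu lam n r B k P)"
proof (induction k arbitrary: P)
  case 0
  then show ?case by simp
next
  case (Suc k)
  let ?G = "((gen_step mu lam n) ^^ k) (\<lambda>_. 0)"
  define I where "I ys = (if opt n \<in> set ys then of_nat (hit_cost n ys)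
               else of_nat lam + (\<integral>\<^sup>+ P'. ?G P' \<partial>measure_pmf (select mu ys)))" for ys
  define a where "a = (real (Suc k) * lam + (real k * lam)^2 / mu) / r^n"
  define b where "b = (real k * lam)^2 * (real k * B) / r^n"
  have r0: "0 \<le> r" using r1 by simp
  have rn: "0 < r^n" using r1 by simp
  have rne: "r \<noteq> 0" using r1 by simp
  have mune: "real mu \<noteq> 0" using mu1 by simp
  have a0: "0 \<le> a" using mu1 rn by (simp add: a_def)
  have b0: "0 \<le> b" using rn B0 by (simp add: b_def)
  have Pne: "P \<noteq> []" using Suc.prems mu1 by auto
  have lam0: "real lam > 0" using mu1 mul by simp
  have pt: "ennreal (real (Suc k) * lam) \<le> I ys + ennreal (a * phi r ys + b)"
    if ys: "ys \<in> set_pmf (offspring n lam P)" for ys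
  proof -
    have len: "length ys = lam" and ell: "\<forall>y\<in>set ys. length y = n"
      using set_offspring[OF ys Pne] Suc.prems by auto
    have phi0: "0 \<le> phi r ys" by (rule phi_nonneg[OF r0])
    show ?thesis
    proof (cases "opt n \<in> set ys")
      case True
      have "r^n \<le> phi r ys" using phi_ge_member[OF r0 True] by (simp add: onemax_opt)
      hence "real (Suc k) * lam * 1 \<le> real (Suc k) * lam * (phi r ys / r^n)"
        using rn by (intro mult_left_mono) auto
      also have "\<dots> \<le> a * phi r ys"
        using rn phi0 mu1 by (simp add: a_def field_simps)
      also have "\<dots> \<le> a * phi r ys + b" using b0 by simp
      finally have "ennreal (real (Suc k) * lam) \<le> ennreal (a * phi r ys + b)" by (intro ennreal_leI) simp
      also have "\<dots> \<le> I ys + ennreal (a * phi r ys + b)" by simp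
      finally show ?thesis .
    next
      case False
      define c where "c = (real k * real lam)^2 * (phi r ys / real mu + real k * B) / r ^ n"
      have sel: "ennreal (real k * lam) \<le> ?G P' + ennreal c" if P': "P' \<in> set_pmf (select mu ys)" for P'
      proof -
        have l': "length P' = mu" using set_select(1)[OF P'] len mul by simp
        have e': "\<forall>x\<in>set P'. length x = n" using set_select(2)[OF P'] ell by auto
        have "Dk mu lam n r B k P' \<le> c"
          unfolding Dk_def c_def using set_select(3)[OF P' r0] rn mu1
          by (intro divide_right_mono mult_left_mono add_right_mono divide_right_mono) auto
        hence "ennreal (Dk mu lam n r B k P') \<le> ennreal c" by (rule ennreal_leI)
        thus ?thesis using Suc.IH[OF l' e'] by (meson add_left_mono order_trans)
      qed
      have "ennreal (real k * lam) = (\<integral>\<^sup>+P'. ennreal (real k * lam) \<partial>measure_pmf (select mu ys))"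
        by (simp add: measure_pmf.emeasure_space_1)
      also have "\<dots> \<le> (\<integral>\<^sup>+P'. ?G P' + ennreal c \<partial>measure_pmf (select mu ys))"
        using sel by (intro nn_integral_mono_AE) (auto simp: AE_measure_pmf_iff)
      also have "\<dots> = (\<integral>\<^sup>+P'. ?G P' \<partial>measure_pmf (select mu ys)) + ennreal c"
        by (simp add: nn_integral_add measure_pmf.emeasure_space_1)
      finally have s1: "ennreal (real k * lam) \<le> (\<integral>\<^sup>+P'. ?G P' \<partial>measure_pmf (select mu ys)) + ennreal c" .
      have "c \<le> a * phi r ys + b"
      proof -
        have "c = ((real k * lam)^2 / mu / r^n) * phi r ys + b"
        proof -
          have "real mu \<noteq> 0" using mu1 by simp
          moreover have "r \<noteq> 0" using r1 by simp
          ultimately show ?thesis by (simp add: c_def b_def field_simps)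
        qed
        also have "(real k * lam)^2 / mu / r^n \<le> a"
        proof -
          have "(real k * lam)^2 / mu \<le> real (Suc k) * lam + (real k*lam)^2/mu" by simp
          thus ?thesis unfolding a_def using rn by (intro divide_right_mono) auto
        qed
        hence "((real k * lam)^2 / mu / r^n) * phi r ys \<le> a * phi r ys"
          using phi0 by (rule mult_right_mono)
        finally show ?thesis by simp
      qed
      hence s2: "ennreal c \<le> ennreal (a * phi r ys + b)" by (rule ennreal_leI)
      have "ennreal (real (Suc k) * lam) = ennreal (real lam) + ennreal (real k * lam)"
        by (simp add: ennreal_plus[symmetric] algebra_simps del: ennreal_plus)
      also have "\<dots> \<le> of_nat lam + ((\<integral>\<^sup>+P'. ?G P' \<partial>measure_pmf (select mu ys)) + ennreal c)"
        using s1 by (simp add: ennreal_of_nat_eq_real_of_nat add_left_mono)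
      also have "\<dots> \<le> of_nat lam + ((\<integral>\<^sup>+P'. ?G P' \<partial>measure_pmf (select mu ys)) + ennreal (a * phi r ys + b))"
        using s2 by (intro add_left_mono)
      also have "\<dots> = I ys + ennreal (a * phi r ys + b)"
        using False by (simp add: I_def add.assoc)
      finally show ?thesis .
    qed
  qed
  have "ennreal (real (Suc k) * lam) = (\<integral>\<^sup>+ys. ennreal (real (Suc k) * lam) \<partial>measure_pmf (offspring n lam P))"
    by (simp add: measure_pmf.emeasure_space_1)
  also have "\<dots> \<le> (\<integral>\<^sup>+ys. I ys + ennreal (a * phi r ys + b) \<partial>measure_pmf (offspring n lam P))"
    using pt by (intro nn_integral_mono_AE) (auto simp: AE_measure_pmf_iff)
  also have "\<dots> = (\<integral>\<^sup>+ys. I ys \<partial>measure_pmf (offspring n lam P)) +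
                  (\<integral>\<^sup>+ys. ennreal (a * phi r ys + b) \<partial>measure_pmf (offspring n lam P))"
    by (simp add: nn_integral_add)
  finally have T1: "ennreal (real (Suc k) * lam) \<le> (\<integral>\<^sup>+ys. I ys \<partial>measure_pmf (offspring n lam P)) +
                  (\<integral>\<^sup>+ys. ennreal (a * phi r ys + b) \<partial>measure_pmf (offspring n lam P))" .
  have T2: "(\<integral>\<^sup>+ys. I ys \<partial>measure_pmf (offspring n lam P)) = ((gen_step mu lam n) ^^ Suc k) (\<lambda>_. 0) P"
    by (simp add: gen_step_def I_def)
  have "(\<integral>\<^sup>+ys. ennreal (a * phi r ys + b) \<partial>measure_pmf (offspring n lam P))
        = ennreal a * (\<integral>\<^sup>+ys. ennreal (phi r ys) \<partial>measure_pmf (offspring n lam P)) + ennreal b"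
  proof -
    have "(\<integral>\<^sup>+ys. ennreal (a * phi r ys + b) \<partial>measure_pmf (offspring n lam P))
        = (\<integral>\<^sup>+ys. ennreal a * ennreal (phi r ys) + ennreal b \<partial>measure_pmf (offspring n lam P))"
    proof (intro nn_integral_cong)
      fix x
      have p: "0 \<le> phi r x" by (rule phi_nonneg[OF r0])
      hence "0 \<le> a * phi r x" using a0 by simp
      thus "ennreal (a * phi r x + b) = ennreal a * ennreal (phi r x) + ennreal b"
        using b0 a0 p by (simp add: ennreal_plus ennreal_mult)
    qed
    also have "\<dots> = ennreal a * (\<integral>\<^sup>+ys. ennreal (phi r ys) \<partial>measure_pmf (offspring n lam P)) + ennreal b"
      by (simp add: nn_integral_add nn_integral_cmult measure_pmf.emeasure_space_1)
    finally show ?thesis .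
  qed
  also have "ennreal a * (\<integral>\<^sup>+ys. ennreal (phi r ys) \<partial>measure_pmf (offspring n lam P)) + ennreal b
      \<le> ennreal a * ennreal (real lam * ((real mu / real lam) * phi r P / real (length P) + B)) + ennreal b"
  proof -
    have "(\<integral>\<^sup>+ys. ennreal (phi r ys) \<partial>measure_pmf (offspring n lam P))
       \<le> ennreal (real lam * ((real mu / real lam) * phi r P / real (length P) + B))"
      by (rule offspring_exp[OF Pne Suc.prems(2) r0 _ B0 MUT]) simp
    thus ?thesis by (intro add_right_mono mult_left_mono) auto
  qed
  also have "\<dots> = ennreal (a * (phi r P + real lam * B) + b)"
  proof -
    have "real lam * ((real mu / real lam) * phi r P / real (length P) + B) = phi r P + real lam * B"
      using Suc.prems(1) lam0 mu1 by (simp add: field_simps)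
    thus ?thesis using a0 b0 phi_nonneg[OF r0, of P] B0
      by (simp add: ennreal_mult[symmetric] ennreal_plus[symmetric] del: ennreal_plus)
  qed
  also have "\<dots> \<le> ennreal (Dk mu lam n r B (Suc k) P)"
  proof (rule ennreal_leI)
    have "a * (phi r P + real lam * B) + b =
       (((real k+1)*lam + (real k*lam)^2/mu)*(phi r P + lam*B) + (real k*lam)^2*(real k*B)) / r^n"
      using rne mune by (simp add: a_def b_def field_simps)
    also have "\<dots> \<le> (((real k+1)*lam)^2*(phi r P/mu + (real k+1)*B)) / r^n"
      using real_step_ineq2[of "real k" "real mu" "real lam" "phi r P" B] mu1 mul lam3 B0 phi_nonneg[OF r0, of P] rn
      by (intro divide_right_mono) auto
    also have "\<dots> = Dk mu lam n r B (Suc k) P" unfolding Dk_def by (simp only: of_nat_Suc add.commute)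
    finally show "a * (phi r P + real lam * B) + b \<le> Dk mu lam n r B (Suc k) P" .
  qed
  finally have T3: "(\<integral>\<^sup>+ys. ennreal (a * phi r ys + b) \<partial>measure_pmf (offspring n lam P)) \<le> ennreal (Dk mu lam n r B (Suc k) P)" .
  show ?case using order_trans[OF T1 add_left_mono[OF T3]] unfolding T2 .
qed



lemma fin_bits: "finite {x::bits. length x = n}"
  using finite_lists_length_eq[of "UNIV::bool set" n] by simp

lemma ne_bits: "{x::bits. length x = n} \<noteq> {}"
  by (auto intro: exI[of _ "replicate n True"])

lemma set_init_pop:
  assumes "P \<in> set_pmf (init_pop mu n)"
  shows "length P = mu" "\<forall>x\<in>set P. length x = n"
  using set_iid_list[OF assms[unfolded init_pop_def]] fin_bits ne_bits by auto

lemma init_phi_exp: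
  assumes "0 \<le> r"
  shows "(\<integral>\<^sup>+P. ennreal (\<Sum>y\<leftarrow>take M P. r ^ onemax y) \<partial>init_pop mu n) = of_nat (min M mu) * ennreal (((1 + r) / 2) ^ n)"
  unfolding init_pop_def using assms by (simp add: iid_list_sum_take uniform_exp)

lemma exp_remaining_ge: "((gen_step mu lam n) ^^ k) (\<lambda>_. 0) P \<le> exp_remaining mu lam n P"
  unfolding exp_remaining_def by (rule SUP_upper) simp

lemma ennreal_absorb:
  assumes "ennreal a \<le> R + ennreal d" "0 \<le> d" "t + d \<le> a"
  shows "ennreal t \<le> R"
proof (cases R)
  case (real x)
  then have "ennreal a \<le> ennreal (x + d)" using assms by (simp add: ennreal_plus)
  hence "a \<le> x + d" using real assms
    by (metis add_nonneg_nonneg ennreal_le_iff)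
  hence "t \<le> x" using assms by simp
  thus ?thesis using real by (simp add: ennreal_leI)
next
  case top
  then show ?thesis by simp
qed

lemma init_bound_B:
  assumes M: "M \<le> mu" and r1: "1 \<le> r"
  shows "ennreal (real M) \<le> expected_runtime mu lam n + ennreal (real M * real M * (((1 + r) / 2) ^ n / r ^ n))"
proof -
  have r0: "0 \<le> r" using r1 by simp
  have rn: "0 < r^n" using r1 by simp
  define J where "J P = (if opt n \<in> set P then of_nat (hit_cost n P) else of_nat mu + exp_remaining mu lam n P)" for P
  have pt: "ennreal (real M) \<le> J P + ennreal (real M / r^n * phi r (take M P))" for P
  proof (cases "opt n \<in> set (take M P)")
    case True
    have "r^n \<le> phi r (take M P)" using phi_ge_member[OF r0 True] by (simp add: onemax_opt)
    hence "real M * 1 \<le> real M * (phi r (take M P) / r^n)"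
      using rn by (intro mult_left_mono) auto
    hence "real M \<le> real M / r^n * phi r (take M P)" by (simp add: field_simps)
    hence "ennreal (real M) \<le> ennreal (real M / r^n * phi r (take M P))" by (rule ennreal_leI)
    also have "\<dots> \<le> J P + ennreal (real M / r^n * phi r (take M P))" by simp
    finally show ?thesis .
  next
    case False
    show ?thesis
    proof (cases "opt n \<in> set P")
      case True
      define i where "i = (LEAST i. i < length P \<and> P ! i = opt n)"
      obtain j where j: "j < length P" "P ! j = opt n" using True by (auto simp: in_set_conv_nth)
      have ex: "\<exists>i. i < length P \<and> P ! i = opt n" using j by blast
      have i: "i < length P \<and> P ! i = opt n" unfolding i_def by (rule LeastI_ex[OF ex])
      have "M \<le> i"
      proof (rule ccontr)
        assume "\<not> M \<le> i"
        hence iM: "i < M" by simp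
        have l: "i < length (take M P)" using iM i by simp
        have "take M P ! i = opt n" using iM i by simp
        hence "opt n \<in> set (take M P)" using nth_mem[OF l] by simp
        thus False using False by simp
      qed
      hence "real M \<le> real (hit_cost n P)" by (simp add: hit_cost_def i_def[symmetric])
      hence "ennreal (real M) \<le> J P" using True by (simp add: J_def ennreal_of_nat_eq_real_of_nat ennreal_leI)
      thus ?thesis by (simp add: add_increasing2)
    next
      case False
      have "ennreal (real M) \<le> of_nat mu" using M by (simp add: ennreal_of_nat_eq_real_of_nat ennreal_leI)
      also have "\<dots> \<le> J P" using False by (simp add: J_def)
      finally show ?thesis by (simp add: add_increasing2)
    qed
  qed
  have "ennreal (real M) = (\<integral>\<^sup>+P. ennreal (real M) \<partial>init_pop mu n)"
    by (simp add: measure_pmf.emeasure_space_1)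
  also have "\<dots> \<le> (\<integral>\<^sup>+P. J P + ennreal (real M / r^n * phi r (take M P)) \<partial>init_pop mu n)"
    using pt by (intro nn_integral_mono) auto
  also have "\<dots> = expected_runtime mu lam n + (\<integral>\<^sup>+P. ennreal (real M / r^n * phi r (take M P)) \<partial>init_pop mu n)"
    by (simp add: nn_integral_add expected_runtime_def J_def del: ennreal_mult')
  finally have T1: "ennreal (real M) \<le> expected_runtime mu lam n + (\<integral>\<^sup>+P. ennreal (real M / r^n * phi r (take M P)) \<partial>init_pop mu n)" .
  have "(\<integral>\<^sup>+P. ennreal (real M / r^n * phi r (take M P)) \<partial>init_pop mu n)
      = (\<integral>\<^sup>+P. ennreal (real M / r^n) * ennreal (phi r (take M P)) \<partial>init_pop mu n)"
  proof (intro nn_integral_cong)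
    fix x
    have "0 \<le> real M / r^n" using rn by simp
    thus "ennreal (real M / r^n * phi r (take M x)) = ennreal (real M / r^n) * ennreal (phi r (take M x))"
      by (rule ennreal_mult')
  qed
  also have "\<dots> = ennreal (real M / r^n) * (of_nat M * ennreal (((1 + r) / 2) ^ n))"
    using init_phi_exp[OF r0, where M=M and mu=mu and n=n] M by (simp add: nn_integral_cmult phi_def min_def)
  also have "\<dots> = ennreal (real M * real M * (((1 + r) / 2) ^ n / r ^ n))"
    using rn r0 by (simp add: ennreal_of_nat_eq_real_of_nat ennreal_mult[symmetric] field_simps)
  finally have T2: "(\<integral>\<^sup>+P. ennreal (real M / r^n * phi r (take M P)) \<partial>init_pop mu n) = ennreal (real M * real M * (((1 + r) / 2) ^ n / r ^ n))" .
  show ?thesis using T1 unfolding T2 .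
qed

lemma init_phi_full:
  assumes "0 \<le> r"
  shows "(\<integral>\<^sup>+P. ennreal (phi r P) \<partial>init_pop mu n) = of_nat mu * ennreal (((1 + r) / 2) ^ n)"
  unfolding init_pop_def phi_def using assms by (simp add: iid_list_sum uniform_exp)

lemma init_bound_A:
  assumes mu1: "1 \<le> mu" and mul: "mu \<le> lam" and lam3: "real lam \<le> 3 * real mu"
    and r1: "1 \<le> r" and B0: "0 \<le> B"
    and MUT: "\<And>x. length x = n \<Longrightarrow> (\<integral>\<^sup>+y. ennreal (r ^ onemax y) \<partial>mutate (1 / real n) x)
                  \<le> ennreal ((real mu / real lam) * r ^ onemax x + B)"
  shows "ennreal (real k * real lam) \<le> expected_runtime mu lam n +
     ennreal (real k * lam * mu * (((1 + r) / 2) ^ n / r ^ n) + (real k * lam)^2 * (((1 + r) / 2) ^ n / r ^ n + real k * B / r^n))"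
proof -
  have r0: "0 \<le> r" using r1 by simp
  have rn: "0 < r^n" using r1 by simp
  have rne: "r \<noteq> 0" using r1 by simp
  have mune: "real mu \<noteq> 0" using mu1 by simp
  define c1 where "c1 = real k * lam / r^n + (real k * lam)^2 / (mu * r^n)"
  define c0 where "c0 = (real k * lam)^2 * (real k * B) / r^n"
  have c10: "0 \<le> c1" using rn by (simp add: c1_def)
  have c00: "0 \<le> c0" using rn B0 by (simp add: c0_def)
  define J where "J P = (if opt n \<in> set P then of_nat (hit_cost n P) else of_nat mu + exp_remaining mu lam n P)" for P
  have pt: "ennreal (real k * lam) \<le> J P + ennreal (c1 * phi r P + c0)" if P: "P \<in> set_pmf (init_pop mu n)" for P
  proof -
    have phi0: "0 \<le> phi r P" by (rule phi_nonneg[OF r0])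
    show ?thesis
    proof (cases "opt n \<in> set P")
      case True
      have "r^n \<le> phi r P" using phi_ge_member[OF r0 True] by (simp add: onemax_opt)
      hence "real k * lam * 1 \<le> real k * lam * (phi r P / r^n)"
        using rn by (intro mult_left_mono) auto
      also have "\<dots> \<le> c1 * phi r P + c0"
      proof -
        have "real k * lam * (phi r P / r^n) = (real k * lam / r^n) * phi r P" by simp
        also have "\<dots> \<le> c1 * phi r P"
          using phi0 rn by (intro mult_right_mono) (auto simp: c1_def)
        finally show ?thesis using c00 by simp
      qed
      finally have "ennreal (real k * lam) \<le> ennreal (c1 * phi r P + c0)" by (intro ennreal_leI) simp
      also have "\<dots> \<le> J P + ennreal (c1 * phi r P + c0)" by simp
      finally show ?thesis .
    next
      case False
      have g: "ennreal (real k * lam) \<le> ((gen_step mu lam n) ^^ k) (\<lambda>_. 0) P + ennreal (Dk mu lam n r B k P)"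
        using gen_bound[OF mu1 mul lam3 r1 B0 MUT] set_init_pop[OF P] by blast
      have "Dk mu lam n r B k P = c1' * phi r P + c0" if "c1' = (real k * lam)^2 / (mu * r^n)" for c1'
        using that rne mune by (simp add: Dk_def c0_def field_simps)
      hence dk: "Dk mu lam n r B k P = (real k * lam)^2 / (mu * r^n) * phi r P + c0" by simp
      have "(real k * lam)^2 / (mu * r^n) * phi r P \<le> c1 * phi r P"
        using phi0 rn by (intro mult_right_mono) (auto simp: c1_def)
      hence "Dk mu lam n r B k P \<le> c1 * phi r P + c0" unfolding dk by simp
      hence d: "ennreal (Dk mu lam n r B k P) \<le> ennreal (c1 * phi r P + c0)" by (rule ennreal_leI)
      have "((gen_step mu lam n) ^^ k) (\<lambda>_. 0) P \<le> J P"
        using False exp_remaining_ge[where mu=mu and lam=lam and n=n and k=k and P=P] by (simp add: J_def add_increasing)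
      hence "((gen_step mu lam n) ^^ k) (\<lambda>_. 0) P + ennreal (Dk mu lam n r B k P) \<le> J P + ennreal (c1 * phi r P + c0)"
        using d by (rule add_mono)
      thus ?thesis using g by (rule order_trans[rotated])
    qed
  qed
  have "ennreal (real k * lam) = (\<integral>\<^sup>+P. ennreal (real k * lam) \<partial>init_pop mu n)"
    by (simp add: measure_pmf.emeasure_space_1)
  also have "\<dots> \<le> (\<integral>\<^sup>+P. J P + ennreal (c1 * phi r P + c0) \<partial>init_pop mu n)"
    using pt by (intro nn_integral_mono_AE) (auto simp: AE_measure_pmf_iff)
  also have "\<dots> = expected_runtime mu lam n + (\<integral>\<^sup>+P. ennreal (c1 * phi r P + c0) \<partial>init_pop mu n)"
    by (simp add: nn_integral_add expected_runtime_def J_def del: ennreal_plus)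
  finally have T1: "ennreal (real k * lam) \<le> expected_runtime mu lam n + (\<integral>\<^sup>+P. ennreal (c1 * phi r P + c0) \<partial>init_pop mu n)" .
  have "(\<integral>\<^sup>+P. ennreal (c1 * phi r P + c0) \<partial>init_pop mu n) = (\<integral>\<^sup>+P. ennreal c1 * ennreal (phi r P) + ennreal c0 \<partial>init_pop mu n)"
  proof (intro nn_integral_cong)
    fix x
    have p: "0 \<le> phi r x" by (rule phi_nonneg[OF r0])
    hence "0 \<le> c1 * phi r x" using c10 by simp
    thus "ennreal (c1 * phi r x + c0) = ennreal c1 * ennreal (phi r x) + ennreal c0"
      using c00 c10 p by (simp add: ennreal_plus ennreal_mult)
  qed
  also have "\<dots> = ennreal c1 * (of_nat mu * ennreal (((1 + r) / 2) ^ n)) + ennreal c0"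
    using init_phi_full[OF r0, where mu=mu and n=n]
    by (simp add: nn_integral_add nn_integral_cmult measure_pmf.emeasure_space_1)
  also have "\<dots> = ennreal (c1 * (real mu * ((1 + r) / 2) ^ n) + c0)"
    using c10 c00 r0 by (simp add: ennreal_of_nat_eq_real_of_nat ennreal_mult[symmetric] ennreal_plus[symmetric] del: ennreal_plus)
  also have "c1 * (real mu * ((1 + r) / 2) ^ n) + c0 = real k * lam * mu * (((1 + r) / 2) ^ n / r ^ n) + (real k * lam)^2 * (((1 + r) / 2) ^ n / r ^ n + real k * B / r^n)"
    using rne mune by (simp add: c1_def c0_def field_simps)
  finally have T2: "(\<integral>\<^sup>+P. ennreal (c1 * phi r P + c0) \<partial>init_pop mu n) = ennreal (real k * lam * mu * (((1 + r) / 2) ^ n / r ^ n) + (real k * lam)^2 * (((1 + r) / 2) ^ n / r ^ n + real k * B / r^n))" .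
  show ?thesis using T1 unfolding T2 .
qed



lemma exp3_ge8: "8 \<le> exp (3::real)"
proof -
  have "2 \<le> exp (1::real)" using exp_ge_add_one_self[of 1] by simp
  hence "2^3 \<le> exp (1::real) ^ 3" by (intro power_mono) auto
  also have "exp (1::real) ^ 3 = exp 3" by (simp add: exp_of_nat_mult[symmetric])
  finally show ?thesis by simp
qed

lemma core:
  fixes eps :: real and mu lam n :: nat
  assumes eps: "0 < eps" "eps < 1" and mu1: "1 \<le> mu" and mul: "mu \<le> lam"
    and lam: "real lam \<le> (1 - eps) * exp 1 * real mu" and n: "8 / eps \<le> real n"
    and gam: "12 \<le> eps^2 * n * (ln (8/eps) - 1) / 16"
  shows "ennreal (exp (eps^2 * n * (ln (8/eps) - 1) / 16 / 4) / 3 - 3) \<le> expected_runtime mu lam n"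
proof -
  define r where "r = 8 / eps"
  define al where "al = eps^2 / 16"
  define g where "g = eps^2 * n * (ln (8/eps) - 1) / 16"
  define B where "B = r^n * exp (- al * n * (ln r - 1))"
  have r8: "8 \<le> r" using eps by (simp add: r_def le_divide_eq)
  have n1: "1 \<le> n" using n r8 r_def by simp
  have rn: "0 < r^n" using r8 by simp
  have g_al: "al * n * (ln r - 1) = g" by (simp add: al_def g_def r_def)
  have Bq: "B / r^n = exp (- g)" using rn r8 by (simp add: B_def g_al[symmetric])
  have B0: "0 \<le> B" using r8 by (simp add: B_def)
  have r1: "1 \<le> r" using r8 by simp
  have lam3: "real lam \<le> 3 * real mu"
  proof -
    have "(1 - eps) * exp 1 \<le> 3" using eps exp_le by (smt (verit) mult_le_cancel_right1 exp_gt_zero)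
    hence "(1 - eps) * exp 1 * real mu \<le> 3 * real mu" by (intro mult_right_mono) auto
    thus ?thesis using lam by simp
  qed
  have MUT: "(\<integral>\<^sup>+y. ennreal (r ^ onemax y) \<partial>mutate (1 / real n) x) \<le> ennreal ((real mu / real lam) * r ^ onemax x + B)"
    if x: "length x = n" for x
  proof -
    have p: "0 \<le> 1 / real n" "1 / real n \<le> 1" using n1 by auto
    have "(\<integral>\<^sup>+y. ennreal (r ^ onemax y) \<partial>mutate (1 / real n) x) =
        ennreal ((1 / real n + (1 - 1 / real n)*r) ^ onemax x * ((1 - 1 / real n) + 1 / real n * r) ^ (length x - onemax x))"
      using mutate_exp[OF p] r8 by simp
    also have "\<dots> \<le> ennreal ((real mu / real lam) * r ^ onemax x + B)"
    proof (rule ennreal_leI)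
      have ob: "n = onemax x + (n - onemax x)" using onemax_le[of x] x by simp
      have "(1 / real n + (1 - 1 / real n)*r) ^ onemax x * ((1 - 1 / real n) + r / real n) ^ (n - onemax x)
          \<le> (real mu / real lam) * r ^ onemax x + r^n * exp (- al * n * (ln r - 1))"
        by (rule mut_factor_bound[OF eps r_def al_def ob n1 _ lam]) (use n r_def mu1 mul in auto)
      thus "(1 / real n + (1 - 1 / real n)*r) ^ onemax x * ((1 - 1 / real n) + 1 / real n * r) ^ (length x - onemax x)
          \<le> (real mu / real lam) * r ^ onemax x + B"
        using x by (simp add: B_def)
    qed
    finally show ?thesis .
  qed
  define Q where "Q = ((1 + r) / 2) ^ n / r ^ n"
  have Q0: "0 \<le> Q" using r8 by (simp add: Q_def)
  have Qg: "Q \<le> exp (- g)"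
  proof -
    have "Q = ((1 + r) / (2 * r)) ^ n" by (simp add: Q_def power_divide power_mult_distrib)
    also have "\<dots> \<le> (3/4) ^ n"
    proof (rule power_mono)
      show "(1 + r) / (2 * r) \<le> 3/4" using r8 by (simp add: field_simps)
      show "0 \<le> (1 + r) / (2 * r)" using r8 by simp
    qed
    also have "\<dots> \<le> exp (- 1/4) ^ n"
      using exp_ge_add_one_self[of "-1/4"] by (intro power_mono) auto
    also have "\<dots> = exp (- real n / 4)" by (simp add: exp_of_nat_mult[symmetric])
    also have "\<dots> \<le> exp (- g)"
    proof -
      have l8: "ln 8 \<le> (3::real)" using ln_mono[OF exp3_ge8] by simp
      have li: "ln (1/eps) \<le> 1/eps - 1" using eps by (intro ln_le_minus_one) auto
      have "ln (8/eps) = ln 8 + ln (1/eps)" using eps by (simp add: ln_div ln_inverse[symmetric] divide_inverse ln_mult)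
      hence "ln (8/eps) - 1 \<le> 1 + 1/eps" using l8 li by linarith
      hence "eps^2 * (ln (8/eps) - 1) \<le> eps^2 * (1 + 1/eps)" by (intro mult_left_mono) auto
      also have "\<dots> = eps^2 + eps" using eps by (simp add: power2_eq_square field_simps)
      also have "\<dots> \<le> 4" using eps by (smt (verit) mult_le_cancel_left1 power2_eq_square)
      finally have "eps^2 * (ln (8/eps) - 1) * real n \<le> 4 * real n" by (intro mult_right_mono) auto
      hence "g \<le> n / 4" by (simp add: g_def mult.commute mult.left_commute)
      thus ?thesis by simp
    qed
    finally show ?thesis .
  qed
  define E4 where "E4 = exp (g / 4)"
  have E4_8: "8 \<le> E4"
  proof -
    have "3 \<le> g / 4" using gam by (simp add: g_def)
    hence "exp 3 \<le> exp (g/4)" by (simp only: exp_le_cancel_iff)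
    thus ?thesis using exp3_ge8 unfolding E4_def by linarith
  qed
  have E4g: "E4^3 * exp (-g) = exp (- g/4)"
    by (simp add: E4_def exp_of_nat_mult[symmetric] exp_add[symmetric])
  have eg4: "exp (- g/4) \<le> 1/8"
  proof -
    have "exp (- g/4) = 1 / E4" by (simp add: E4_def exp_minus field_simps)
    moreover have "1 / E4 \<le> 1 / 8" using E4_8 by (intro divide_left_mono) auto
    ultimately show ?thesis by simp
  qed
  define N0 where "N0 = nat \<lfloor>E4\<rfloor>"
  have N0E: "real N0 \<le> E4" "E4 < real N0 + 1" using E4_8 by (simp_all add: N0_def)
  have N01: "1 \<le> N0" using N0E E4_8 by simp
  have N03: "real N0 ^ 3 * exp (-g) \<le> 1/8"
  proof -
    have "real N0 ^ 3 * exp (-g) \<le> E4 ^ 3 * exp (-g)" using N0E by (intro mult_right_mono power_mono) auto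
    thus ?thesis using E4g eg4 by simp
  qed
  have ge: "0 \<le> exp (- g)" by simp
  show ?thesis
  proof (cases "lam \<le> N0")
    case True
    define k where "k = N0 div lam"
    have lam0: "0 < lam" using mu1 mul by simp
    have k1: "1 \<le> k"
    proof -
      have "lam div lam \<le> N0 div lam" by (rule div_le_mono[OF True])
      thus ?thesis using lam0 by (simp add: k_def)
    qed
    have kl: "k * lam \<le> N0" by (simp add: k_def)
    have N0lt: "N0 < 2 * (k * lam)"
    proof -
      have "N0 = k * lam + N0 mod lam" by (simp add: k_def)
      moreover have "N0 mod lam < lam" using lam0 by simp
      moreover have "lam \<le> k * lam" using k1 by simp
      ultimately show ?thesis by linarith
    qed
    define d where "d = real k * lam * mu * Q + (real k * lam)^2 * (Q + real k * B / r^n)"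
    have A: "ennreal (real k * real lam) \<le> expected_runtime mu lam n + ennreal d"
      unfolding d_def Q_def by (rule init_bound_A[OF mu1 mul lam3 r1 B0 MUT])
    have kN: "real k \<le> real N0" "real k * real lam \<le> real N0" "real mu \<le> real N0"
    proof -
      have "k \<le> k * lam" using lam0 by simp
      hence "k \<le> N0" using kl by linarith
      moreover have "mu \<le> N0" using mul True by linarith
      ultimately show "real k \<le> real N0" "real k * real lam \<le> real N0" "real mu \<le> real N0"
        using kl by (simp_all flip: of_nat_mult)
    qed
    have d0: "0 \<le> d" using Q0 B0 rn by (simp add: d_def)
    have dle: "d \<le> 3/8"
    proof -
      have f1: "real k * lam * mu * Q \<le> real N0 * real N0 * exp (-g)"
        using kN Q0 Qg by (intro mult_mono) auto
      have f2: "(real k * lam)^2 * Q \<le> real N0 ^ 2 * exp (-g)"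
        using kN Q0 Qg by (intro mult_mono power_mono) auto
      have f3: "(real k * lam)^2 * (real k * B / r^n) \<le> real N0 ^ 2 * (real N0 * exp (-g))"
      proof -
        have "real k * B / r^n = real k * (B / r^n)" by simp
        also have "\<dots> \<le> real N0 * exp (-g)" unfolding Bq using kN by (intro mult_right_mono) auto
        finally have "real k * B / r^n \<le> real N0 * exp (-g)" .
        thus ?thesis using kN B0 rn by (intro mult_mono power_mono) auto
      qed
      have f4: "real N0 * real N0 * exp (-g) \<le> real N0 ^ 3 * exp (-g)"
        using N01 by (intro mult_right_mono) (auto simp: power3_eq_cube)
      have f5: "real N0 ^ 2 * exp (-g) \<le> real N0 ^ 3 * exp (-g)"
        using N01 by (intro mult_right_mono) (auto simp: power3_eq_cube power2_eq_square)
      have f6: "real N0 ^ 2 * (real N0 * exp (-g)) = real N0 ^ 3 * exp (-g)"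
        by (simp add: power3_eq_cube power2_eq_square)
      have deq: "d = real k * lam * mu * Q + (real k * lam)^2 * Q + (real k * lam)^2 * (real k * B / r^n)"
        by (simp add: d_def distrib_left)
      show ?thesis unfolding deq using f1 f2 f3 f4 f5 f6 N03 by linarith
    qed
    have "exp (g / 4) / 3 - 3 + d \<le> real k * real lam"
    proof -
      have "real N0 < 2 * (real k * real lam)" using N0lt by (metis of_nat_less_iff of_nat_mult of_nat_numeral)
      thus ?thesis using N0E dle E4_def by linarith
    qed
    thus ?thesis using ennreal_absorb[OF A d0] by (simp add: g_def)
  next
    case False
    define M where "M = N0 div 3"
    have M3: "3 * M \<le> N0" by (simp add: M_def)
    have Mmu: "M \<le> mu" using M3 False lam3 by linarith
    have MN: "real N0 < 3 * real M + 3" by (simp add: M_def)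
    define d where "d = real M * real M * Q"
    have A: "ennreal (real M) \<le> expected_runtime mu lam n + ennreal d"
      unfolding d_def Q_def by (rule init_bound_B[OF Mmu r1])
    have d0: "0 \<le> d" using Q0 by (simp add: d_def)
    have dle: "d \<le> 1/8"
    proof -
      have "real M \<le> real N0" using M3 by simp
      hence "d \<le> real N0 * real N0 * exp (-g)" unfolding d_def using Q0 Qg by (intro mult_mono) auto
      also have "\<dots> \<le> real N0 ^ 3 * exp (-g)"
        using N01 by (intro mult_right_mono) (auto simp: power3_eq_cube)
      finally show ?thesis using N03 by simp
    qed
    have "exp (g / 4) / 3 - 3 + d \<le> real M" using MN N0E dle E4_def by linarith
    thus ?thesis using ennreal_absorb[OF A d0] by (simp add: g_def)
  qed
qed



lemma ln8: "3/2 \<le> ln (8::real)"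
proof -
  have e1: "exp (1::real) \<le> 3" using exp_le by simp
  have "exp (3/2::real) ^ 2 = exp 3" by (simp add: exp_of_nat_mult[symmetric])
  also have "exp (3::real) = exp 1 ^ 3" by (simp add: exp_of_nat_mult[symmetric])
  also have "\<dots> \<le> 3 ^ 3" using e1 by (intro power_mono) auto
  finally have "exp (3/2::real) ^ 2 \<le> 8 ^ 2" by simp
  hence "exp (3/2::real) \<le> 8" by (rule power2_le_imp_le) simp
  thus ?thesis by (subst ln_ge_iff) auto
qed

lemma ln_8_eps: "0 < (e::real) \<Longrightarrow> e < 1 \<Longrightarrow> ln (8 / e) - 1 \<ge> 1/2 + ln (1 / e) \<and> ln (1/e) \<ge> 0"
proof -
  assume e: "0 < e" "e < 1"
  have "ln (8/e) = ln 8 + ln (1/e)" using e by (simp add: ln_div)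
  moreover have "ln (1/e) \<ge> 0" using e by simp
  ultimately show ?thesis using ln8 by simp
qed

lemma grow:
  fixes x d :: real
  assumes "4 \<le> x"
  shows "x powr d \<le> x powr (\<bar>d\<bar> + 2) / 3 - 3"
proof -
  have x0: "0 < x" using assms by simp
  have a: "x powr (\<bar>d\<bar> + 2) = x powr \<bar>d\<bar> * x^2"
    using x0 by (simp add: powr_add powr_realpow[of x 2, simplified])
  have b: "x powr d \<le> x powr \<bar>d\<bar>" using assms by (intro powr_mono) auto
  have c: "1 \<le> x powr \<bar>d\<bar>" using assms by (intro ge_one_powr_ge_zero) auto
  have "16 \<le> x^2" using assms power_mono[of 4 x 2] by simp
  hence "x powr \<bar>d\<bar> * 16 \<le> x powr \<bar>d\<bar> * x^2" using c by (intro mult_left_mono) auto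
  thus ?thesis using a b c by linarith
qed

lemma part1:
  fixes mu lam :: "nat \<Rightarrow> nat" and eps :: real
  assumes mu_pos: "\<And>n. mu n \<ge> 1" and mu_le_lam: "\<And>n. mu n \<le> lam n"
    and eps: "0 < eps" "eps < 1" and lam: "\<forall>n. real (lam n) \<le> (1 - eps) * exp 1 * real (mu n)"
  shows "\<exists>c>0. \<forall>\<^sub>F n in sequentially. ennreal (exp (c * real n)) \<le> expected_runtime (mu n) (lam n) n"
proof -
  define c0 where "c0 = eps^2 * (ln (8/eps) - 1) / 16"
  have c00: "0 < c0"
  proof -
    have "ln (8/eps) - 1 \<ge> 1/2" using ln_8_eps[OF eps] by linarith
    thus ?thesis using eps by (simp add: c0_def)
  qed
  have ev: "\<forall>\<^sub>F n in sequentially. 8/eps \<le> real n \<and> 40/c0 \<le> real n"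
    by (intro eventually_conj) real_asymp+
  show ?thesis
  proof (intro exI[of _ "c0/8"] conjI)
    show "0 < c0/8" using c00 by simp
    show "\<forall>\<^sub>F n in sequentially. ennreal (exp (c0/8 * real n)) \<le> expected_runtime (mu n) (lam n) n"
      using ev
    proof eventually_elim
      case (elim n)
      have g: "eps^2 * real n * (ln (8/eps) - 1) / 16 = c0 * n" by (simp add: c0_def)
      have c40: "40 \<le> c0 * n" using elim c00 by (simp add: field_simps)
      have core': "ennreal (exp (c0 * n / 4) / 3 - 3) \<le> expected_runtime (mu n) (lam n) n"
        using core[OF eps mu_pos mu_le_lam lam[rule_format] conjunct1[OF elim]] c40 by (simp add: g)
      define y where "y = exp (c0 * n / 8)"
      have "5 \<le> c0 * n / 8" using c40 by simp
      hence y6: "6 \<le> y" using exp_ge_add_one_self[of "c0 * n / 8"] unfolding y_def by linarith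
      have yy: "exp (c0 * n / 4) = y^2" by (simp add: y_def exp_of_nat_mult[symmetric])
      have "y \<le> y^2 / 3 - 3"
      proof -
        have "y * 6 \<le> y * y" using y6 by (intro mult_left_mono) auto
        thus ?thesis using y6 unfolding power2_eq_square by linarith
      qed
      hence "exp (c0/8 * real n) \<le> exp (c0 * n / 4) / 3 - 3" by (simp add: yy y_def)
      hence "ennreal (exp (c0/8 * real n)) \<le> ennreal (exp (c0 * n / 4) / 3 - 3)" by (rule ennreal_leI)
      thus ?case using core' by (rule order_trans)
    qed
  qed
qed

lemma part2:
  fixes mu lam :: "nat \<Rightarrow> nat" and eps :: "nat \<Rightarrow> real" and d :: real
  assumes mu_pos: "\<And>n. mu n \<ge> 1" and mu_le_lam: "\<And>n. mu n \<le> lam n"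
    and epsb: "\<forall>n. 0 < eps n \<and> eps n < 1" and small: "(\<lambda>n. 1 / sqrt (real n)) \<in> o(eps)"
    and lam: "\<forall>n. real (lam n) \<le> (1 - eps n) * exp 1 * real (mu n)"
  shows "\<forall>\<^sub>F n in sequentially. ennreal (real n powr d) \<le> expected_runtime (mu n) (lam n) n"
proof -
  define A where "A = \<bar>d\<bar> + 2"
  define K where "K = 16 * A"
  have A2: "2 \<le> A" by (simp add: A_def)
  have A1: "1 \<le> A" using A2 by simp
  have K32: "32 \<le> K" using A2 by (simp add: K_def)
  have e1: "\<forall>\<^sub>F n in sequentially. norm (1 / sqrt (real n)) \<le> (1/K) * norm (eps n)"
    using landau_o.smallD[OF small, of "1/K"] K32 by simp
  have lim: "(\<lambda>n::nat. ln (real n) / sqrt (real n)) \<longlonglongrightarrow> 0" by real_asymp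
  have e2: "\<forall>\<^sub>F n in sequentially. ln (real n) / sqrt (real n) < 1 / (128 * A)"
    using order_tendstoD(2)[OF lim] A1 by simp
  have e3: "\<forall>\<^sub>F n in sequentially. 16 \<le> real n" by real_asymp
  show ?thesis using e1 e2 e3
  proof eventually_elim
    case (elim n)
    define e where "e = eps n"
    have e: "0 < e" "e < 1" using epsb by (auto simp: e_def)
    have n16: "16 \<le> real n" using elim by simp
    define sn where "sn = sqrt (real n)"
    have sn4: "4 \<le> sn" using n16 real_sqrt_le_mono[OF n16] by (simp add: sn_def)
    have snsq: "sn^2 = real n" using n16 by (simp add: sn_def)
    have Ke: "K \<le> e * sn"
    proof -
      have "1 / sn \<le> (1/K) * e" using elim(1) e sn4 by (simp add: sn_def e_def)
      thus ?thesis using sn4 K32 by (simp add: field_simps)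
    qed
    have e2n: "K^2 \<le> e^2 * real n"
    proof -
      have "K^2 \<le> (e * sn)^2" using Ke K32 by (intro power_mono) auto
      thus ?thesis by (simp add: power_mult_distrib snsq)
    qed
    have n8: "8 / e \<le> real n"
    proof -
      have "8 \<le> e * sn" using Ke K32 by simp
      hence "8 / e \<le> sn" using e by (simp add: field_simps)
      moreover have "sn \<le> real n"
      proof -
        have "sn * 1 \<le> sn * sn" using sn4 by (intro mult_left_mono) auto
        thus ?thesis using snsq by (simp add: power2_eq_square)
      qed
      ultimately show ?thesis by simp
    qed
    define g where "g = e^2 * real n * (ln (8/e) - 1) / 16"
    have L: "ln (8 / e) - 1 \<ge> 1/2 + ln (1 / e)" "ln (1/e) \<ge> 0" using ln_8_eps[OF e] by auto
    have en0: "0 \<le> e^2 * real n" by simp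
    have g32: "e^2 * real n / 32 \<le> g"
    proof -
      have "e^2 * real n * (1/2) \<le> e^2 * real n * (ln (8/e) - 1)" using L en0 by (intro mult_left_mono) auto
      thus ?thesis unfolding g_def by linarith
    qed
    have g12: "12 \<le> g"
    proof -
      have "(32::real) * 32 \<le> K * K" using K32 by (intro mult_mono) auto
      hence "1024 \<le> K^2" by (simp add: power2_eq_square)
      thus ?thesis using e2n g32 by linarith
    qed
    have lnn0: "0 \<le> ln (real n)" using n16 by simp
    have gA: "4 * A * ln (real n) \<le> g"
    proof (cases "e * real n powr (1/4) \<le> 1")
      case True
      have q0: "0 < real n powr (1/4)" using n16 by simp
      have "real n powr (1/4) \<le> 1 / e" using True e by (simp add: field_simps)
      hence "ln (real n powr (1/4)) \<le> ln (1 / e)" using q0 by (intro ln_mono) auto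
      hence l4: "ln (real n) / 4 \<le> ln (1/e)" by simp
      have "4 * A * ln (real n) \<le> 4 * A^2 * ln (real n)"
        using A1 lnn0 by (intro mult_right_mono mult_left_mono) (auto simp: power2_eq_square)
      also have "\<dots> = K^2 * (ln (real n) / 4) / 16 " by (simp add: K_def power2_eq_square)
      also have "\<dots> \<le> e^2 * real n * (ln (1/e)) / 16"
        using e2n l4 lnn0 K32 by (intro divide_right_mono mult_mono) auto
      also have "\<dots> \<le> g"
      proof -
        have "e^2 * real n * ln (1/e) \<le> e^2 * real n * (ln (8/e) - 1)" using L en0 by (intro mult_left_mono) auto
        thus ?thesis by (simp add: g_def)
      qed
      finally show ?thesis .
    next
      case False
      have q2: "(real n powr (1/4))^2 = sn"
        using n16 by (simp add: sn_def powr_realpow[symmetric] powr_powr powr_half_sqrt)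
      have "1 < (e * real n powr (1/4))^2" using False by (simp add: one_less_power)
      hence "1 < e^2 * sn" by (simp add: power_mult_distrib q2)
      hence "sn < e^2 * sn * sn" using sn4 by (simp add: mult_strict_right_mono)
      hence sng: "sn \<le> e^2 * real n" using snsq by (simp add: power2_eq_square mult.assoc)
      have "ln (real n) = (ln (real n) / sn) * sn" using sn4 by simp
      also have "\<dots> < (1 / (128 * A)) * sn"
        using elim(2) sn4 n16 by (intro mult_strict_right_mono) (auto simp: sn_def)
      finally have "ln (real n) < sn / (128 * A)" by simp
      hence "4 * A * ln (real n) \<le> sn / 32" using A1 by (simp add: field_simps)
      thus ?thesis using sng g32 by simp
    qed
    have core': "ennreal (exp (g / 4) / 3 - 3) \<le> expected_runtime (mu n) (lam n) n"
      using core[OF e mu_pos mu_le_lam _ n8] lam g12 by (simp add: g_def e_def)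
    have "real n powr d \<le> real n powr A / 3 - 3" unfolding A_def by (rule grow) (use n16 in simp)
    also have "real n powr A = exp (A * ln (real n))" using n16 by (simp add: powr_def)
    also have "exp (A * ln (real n)) \<le> exp (g / 4)" using gA by simp
    finally have "real n powr d \<le> exp (g / 4) / 3 - 3" by simp
    hence "ennreal (real n powr d) \<le> ennreal (exp (g / 4) / 3 - 3)" by (rule ennreal_leI)
    thus ?case using core' by (rule order_trans)
  qed
qed


theorem theorem3:
  fixes mu lam :: "nat \<Rightarrow> nat"
  assumes mu_pos: "\<And>n. mu n \<ge> 1"
    and lam_pos: "\<And>n. lam n \<ge> 1"
    and mu_le_lam: "\<And>n. mu n \<le> lam n"
  shows
    "(\<forall>\<epsilon>::real. 0 < \<epsilon> \<and> \<epsilon> < 1 \<and> (\<forall>n. real (lam n) \<le> (1 - \<epsilon>) * exp 1 * real (mu n)) \<longrightarrow>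
        (\<exists>c>0. \<forall>\<^sub>F n in sequentially.
            ennreal (exp (c * real n)) \<le> expected_runtime (mu n) (lam n) n))
     \<and>
     (\<forall>\<epsilon>::nat \<Rightarrow> real. (\<forall>n. 0 < \<epsilon> n \<and> \<epsilon> n < 1) \<and> (\<lambda>n. 1 / sqrt (real n)) \<in> o(\<epsilon>) \<and>
        (\<forall>n. real (lam n) \<le> (1 - \<epsilon> n) * exp 1 * real (mu n)) \<longrightarrow>
        (\<forall>d::real. \<forall>\<^sub>F n in sequentially.
            ennreal (real n powr d) \<le> expected_runtime (mu n) (lam n) n))"
proof (intro conjI allI impI)
  fix eps :: real
  assume h: "0 < eps \<and> eps < 1 \<and> (\<forall>n. real (lam n) \<le> (1 - eps) * exp 1 * real (mu n))"
  show "\<exists>c>0. \<forall>\<^sub>F n in sequentially. ennreal (exp (c * real n)) \<le> expected_runtime (mu n) (lam n) n"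
  proof -
    from h have h1: "0 < eps" and h2: "eps < 1"
      and h3: "\<forall>n. real (lam n) \<le> (1 - eps) * exp 1 * real (mu n)" by auto
    show ?thesis by (rule part1[OF mu_pos mu_le_lam h1 h2 h3])
  qed
next
  fix eps :: "nat \<Rightarrow> real" and d :: real
  assume h: "(\<forall>n. 0 < eps n \<and> eps n < 1) \<and> (\<lambda>n. 1 / sqrt (real n)) \<in> o(eps) \<and>
        (\<forall>n. real (lam n) \<le> (1 - eps n) * exp 1 * real (mu n))"
  show "\<forall>\<^sub>F n in sequentially. ennreal (real n powr d) \<le> expected_runtime (mu n) (lam n) n"
  proof -
    from h have h1: "\<forall>n. 0 < eps n \<and> eps n < 1" and h2: "(\<lambda>n. 1 / sqrt (real n)) \<in> o(eps)"
      and h3: "\<forall>n. real (lam n) \<le> (1 - eps n) * exp 1 * real (mu n)" by auto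
    show ?thesis by (rule part2[OF mu_pos mu_le_lam h1 h2 h3])
  qed
qed

end
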